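(* Fix an integer $p \ge 2$ and positive reals $U_1,\dots,U_p > 0$, and a density $Q = 1/m$ with $m$ a positive integer, $1 \le m \le p-1$. Consider spinless fermion occupation configurations $(n_i)_{i\in\mathbb{Z}}$, $n_i\in\{0,1\}$, on the infinite one-dimensional lattice that are periodic with some period $L$ (i.e. $n_{i+L}=n_i$) and have $N = QL$ occupied sites per period. The energy density of such a configuration is $$\varepsilon = \frac{1}{L}\sum_{i=1}^{L}\sum_{k=1}^{p} U_k\, n_i\, n_{i+k}.$$ A ground state is a periodic configuration of density $Q$ whose energy density is minimal among all periodic configurations of density $Q$ (of any period). Then in any ground state, the number of empty sites between any two consecutive occupied sites (the "space" between them) is at most $p$.
   Context: This is the atomic limit ($t=0$) of the generalised $t$-$V$ model with Hamiltonian $H=\sum_i\sum_{m=1}^p U_m n_i n_{i+m}$, with repulsive interactions of maximal range $p$ (no convexity assumption on the $U_m$), at a critical (commensurate) density $Q=1/m$. A periodic system of $L$ sites is regarded as an infinite system with a unit cell of $L$ sites, and energies are compared via energy per site. *)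

theory Defs
  imports Main "HOL.Real"
begin

text \<open>Occupation configurations on the infinite lattice Z: c i = True iff site i is occupied.\<close>

definition periodic_config :: "(int \<Rightarrow> bool) \<Rightarrow> nat \<Rightarrow> bool" where
  "periodic_config c L \<longleftrightarrow> L > 0 \<and> (\<forall>i. c (i + int L) = c i)"

definition occ_count :: "(int \<Rightarrow> bool) \<Rightarrow> nat \<Rightarrow> nat" where
  "occ_count c L = card {i \<in> {1..int L}. c i}"

text \<open>c is periodic with period L and has density Q = 1/m, i.e. N = L/m occupied sites per period.\<close>
definition has_density :: "(int \<Rightarrow> bool) \<Rightarrow> nat \<Rightarrow> nat \<Rightarrow> bool" where
  "has_density c L m \<longleftrightarrow> periodic_config c L \<and> m * occ_count c L = L"

definition energy_density :: "(nat \<Rightarrow> real) \<Rightarrow> nat \<Rightarrow> (int \<Rightarrow> bool) \<Rightarrow> nat \<Rightarrow> real" where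
  "energy_density U p c L =
     (1 / real L) * (\<Sum>i\<in>{1..int L}. \<Sum>k\<in>{1..p}.
        U k * of_bool (c i) * of_bool (c (i + int k)))"

definition ground_state :: "(nat \<Rightarrow> real) \<Rightarrow> nat \<Rightarrow> nat \<Rightarrow> (int \<Rightarrow> bool) \<Rightarrow> bool" where
  "ground_state U p m c \<longleftrightarrow>
     (\<exists>L. has_density c L m \<and>
        (\<forall>c' L'. has_density c' L' m \<longrightarrow> energy_density U p c L \<le> energy_density U p c' L'))"

end

theory Submission
  imports Defs
begin

definition S :: "(int \<Rightarrow> real) \<Rightarrow> int \<Rightarrow> int \<Rightarrow> real" where
  "S f a n = (\<Sum>x\<in>{a..<a+n}. f x)"

lemma S_split:
  assumes "0 \<le> n1" "0 \<le> n2"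
  shows "S f a (n1+n2) = S f a n1 + S f (a+n1) n2"
proof -
  have e: "{a..<a+(n1+n2)} = {a..<a+n1} \<union> {a+n1..<a+n1+n2}" using assms by auto
  show ?thesis unfolding S_def e
    by (subst sum.union_disjoint) (auto simp: add.assoc)
qed

lemma S_one: "S f a 1 = f a"
proof -
  have "{a..<a+1} = {a}" by auto
  then show ?thesis unfolding S_def by simp
qed

lemma per_nat:
  fixes f :: "int \<Rightarrow> 'b" and L :: int
  assumes "\<forall>x. f (x + L) = f x"
  shows "f (x + int n * L) = f x"
proof (induction n)
  case 0 then show ?case by simp
next
  case (Suc n)
  have "f (x + int (Suc n) * L) = f ((x + int n * L) + L)" by (simp add: algebra_simps)
  then show ?case using assms Suc by simp
qed

lemma per_int:
  fixes f :: "int \<Rightarrow> 'b" and L k :: int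
  assumes "\<forall>x. f (x + L) = f x"
  shows "f (x + k * L) = f x"
proof (cases "k \<ge> 0")
  case True
  then obtain n where "k = int n" by (metis nonneg_int_cases)
  then show ?thesis using per_nat[OF assms] by simp
next
  case False
  then obtain n where n: "k = - int n" by (metis nonneg_int_cases neg_0_le_iff_le linear minus_minus)
  have "f ((x + k * L) + int n * L) = f (x + k*L)" using per_nat[OF assms] by blast
  then show ?thesis using n by (simp add: algebra_simps)
qed

lemma S_step:
  assumes "\<forall>x. f (x + L) = f x" "0 \<le> L"
  shows "S f (a+1) L = S f a L"
proof -
  have "S f a (1 + L) = f a + S f (a+1) L" using S_split[of 1 L f a] assms S_one by simp
  moreover have "S f a (L + 1) = S f a L + f (a + L)" using S_split[of L 1 f a] assms S_one by simp
  moreover have "f (a + L) = f a" using assms(1) by blast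
  ultimately show ?thesis by (simp add: add.commute)
qed

lemma S_inv:
  assumes "\<forall>x. f (x + L) = f x" "0 \<le> L"
  shows "S f a L = S f 0 L"
proof (induction a rule: int_induct[where k=0])
  case base then show ?case by simp
next
  case (step1 i) then show ?case using S_step[OF assms, of i] by simp
next
  case (step2 i) then show ?case using S_step[OF assms, of "i - 1"] by simp
qed

lemma S_mult:
  assumes "\<forall>x. f (x + L) = f x" "0 \<le> L"
  shows "S f a (int k * L) = real k * S f a L"
proof (induction k)
  case 0 then show ?case by (simp add: S_def)
next
  case (Suc k)
  have "S f a (int (Suc k) * L) = S f a (int k * L) + S f (a + int k * L) L"
    using S_split[of "int k * L" L f a] assms by (simp add: algebra_simps)
  also have "S f (a + int k * L) L = S f a L" using S_inv[OF assms] by metis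
  finally show ?case using Suc by (simp add: algebra_simps)
qed

lemma S_cong:
  assumes "\<And>x. a \<le> x \<Longrightarrow> x < a + n \<Longrightarrow> f x = g x"
  shows "S f a n = S g a n"
  unfolding S_def using assms by (intro sum.cong) auto

lemma S_shift: "S (\<lambda>x. f (x + d)) a n = S f (a + d) n"
  unfolding S_def
  by (rule sum.reindex_bij_witness[of _ "\<lambda>x. x - d" "\<lambda>x. x + d"]) auto

lemma S_nonneg: "(\<And>x. f x \<ge> 0) \<Longrightarrow> S f a n \<ge> 0"
  unfolding S_def by (simp add: sum_nonneg)

definition loc :: "(nat \<Rightarrow> real) \<Rightarrow> nat \<Rightarrow> (int \<Rightarrow> bool) \<Rightarrow> int \<Rightarrow> real" where
  "loc U p c x = (\<Sum>k\<in>{1..p}. U k * of_bool (c x) * of_bool (c (x + int k)))"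

lemma ivl_eq: "{1..int L} = {1..<1 + int L}" by auto

lemma ed_eq: "energy_density U p c L = S (loc U p c) 1 (int L) / real L"
  unfolding energy_density_def S_def loc_def ivl_eq by simp

lemma occ_eq: "real (occ_count c L) = S (\<lambda>x. of_bool (c x)) 1 (int L)"
proof -
  have "{i \<in> {1..int L}. c i} = {1..<1 + int L} \<inter> {x. c x}" by auto
  then show ?thesis unfolding occ_count_def S_def by simp
qed

lemma loc_nonneg:
  assumes "\<forall>k\<in>{1..p}. U k > 0"
  shows "loc U p c x \<ge> 0"
  unfolding loc_def using assms by (intro sum_nonneg) (auto intro: less_imp_le)

lemma loc_zero:
  assumes "\<forall>k\<in>{1..p}. U k > 0" "loc U p c x = 0" "c x" "k \<in> {1..p}"
  shows "\<not> c (x + int k)"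
proof
  assume ck: "c (x + int k)"
  have "\<forall>k\<in>{1..p}. U k * of_bool (c x) * of_bool (c (x + int k)) = 0"
    using assms(2) unfolding loc_def
    by (subst (asm) sum_nonneg_eq_0_iff) (use assms(1) in \<open>auto intro: less_imp_le\<close>)
  then show False using assms ck by fastforce
qed

lemma loc_per:
  assumes "\<forall>x. c (x + L) = c x"
  shows "\<forall>x. loc U p c (x + L) = loc U p c x"
proof
  fix x
  have "c (x + L + int k) = c (x + int k)" for k
    using assms[rule_format, of "x + int k"] by (simp add: algebra_simps)
  then show "loc U p c (x + L) = loc U p c x" unfolding loc_def using assms by simp
qed

lemma energy_pos:
  assumes "p \<ge> 2" and U: "\<forall>k\<in>{1..p}. U k > 0"
    and "1 \<le> m" and "m \<le> p - 1"
    and hd: "has_density c L m"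
  shows "S (loc U p c) 1 (int L) > 0"
proof (rule ccontr)
  assume "\<not> ?thesis"
  moreover have "S (loc U p c) 1 (int L) \<ge> 0" by (rule S_nonneg, rule loc_nonneg[OF U])
  ultimately have E0: "S (loc U p c) 1 (int L) = 0" by simp
  have Lpos: "L > 0" and cper: "\<forall>x. c (x + int L) = c x"
    using hd unfolding has_density_def periodic_config_def by auto
  have lper: "\<forall>x. loc U p c (x + int L) = loc U p c x" by (rule loc_per[OF cper])
  have z1: "\<forall>x\<in>{1..<1 + int L}. loc U p c x = 0"
    using E0 unfolding S_def
    by (subst (asm) sum_nonneg_eq_0_iff) (auto intro: loc_nonneg[OF U])
  have z: "loc U p c x = 0" for x
  proof -
    define x' where "x' = (x - 1) mod int L + 1"
    have "x' \<in> {1..<1 + int L}" unfolding x'_def using Lpos by auto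
    moreover have "x' = x + (- ((x - 1) div int L)) * int L"
      unfolding x'_def by (simp add: algebra_simps minus_div_mult_eq_mod[symmetric])
    ultimately show ?thesis using z1 per_int[OF lper, of x "- ((x - 1) div int L)"] by simp
  qed
  have noadj: "\<not> c (x + int k)" if "c x" "k \<in> {1..p}" for x k
    using loc_zero[OF U z that] .
  define cb where "cb = (\<lambda>x. of_bool (c x) :: real)"
  have win: "S cb a (int p + 1) \<le> 1" for a
  proof -
    have fin: "finite ({a..<a + (int p + 1)} \<inter> {x. c x})" by simp
    have "card ({a..<a + (int p + 1)} \<inter> {x. c x}) \<le> Suc 0"
    proof (subst card_le_Suc0_iff_eq[OF fin], intro ballI)
      fix x y assume x: "x \<in> {a..<a + (int p + 1)} \<inter> {x. c x}" and y: "y \<in> {a..<a + (int p + 1)} \<inter> {x. c x}"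
      show "x = y"
      proof (rule ccontr)
        assume "x \<noteq> y"
        then consider "x < y" | "y < x" by linarith
        then show False
        proof cases
          case 1
          have "nat (y - x) \<in> {1..p}" using 1 x y by auto
          then show False using noadj[of x "nat (y - x)"] x y 1 by auto
        next
          case 2
          have "nat (x - y) \<in> {1..p}" using 2 x y by auto
          then show False using noadj[of y "nat (x - y)"] x y 2 by auto
        qed
      qed
    qed
    then show ?thesis unfolding S_def cb_def by simp
  qed
  have wins: "S cb a (int k * (int p + 1)) \<le> real k" for k a
  proof (induction k arbitrary: a)
    case 0 then show ?case by (simp add: S_def)
  next
    case (Suc k)
    have "S cb a (int (Suc k) * (int p + 1)) = S cb a (int k * (int p + 1)) + S cb (a + int k * (int p + 1)) (int p + 1)"
      using S_split[of "int k * (int p + 1)" "int p + 1" cb a] by (simp add: algebra_simps)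
    moreover have "S cb a (int k * (int p + 1)) \<le> real k" by (rule Suc.IH)
    moreover have "S cb (a + int k * (int p + 1)) (int p + 1) \<le> 1" by (rule win)
    ultimately show ?case by (simp only: of_nat_Suc)
  qed
  have cbper: "\<forall>x. cb (x + int L) = cb x" using cper unfolding cb_def by simp
  define N where "N = occ_count c L"
  have mN: "m * N = L" using hd unfolding has_density_def N_def by simp
  have NS: "real N = S cb 1 (int L)" unfolding N_def cb_def by (rule occ_eq)
  have "S cb 1 (int (p + 1) * int L) = real (p + 1) * real N"
    using S_mult[OF cbper, of 1 "p+1"] NS by simp
  moreover have "S cb 1 (int L * (int p + 1)) \<le> real L" using wins[where k=L and a=1] .
  ultimately have "real (p + 1) * real N \<le> real L" by (simp add: algebra_simps)
  then have "real (p + 1) * real N \<le> real m * real N" using mN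
    by (metis of_nat_mult)
  moreover have "real m \<le> real p - 1" using assms by linarith
  ultimately have A: "real (p + 1) * real N \<le> real m * real N" "real m * real N \<le> (real p - 1) * real N"
    by (auto intro: mult_right_mono)
  then have "real p * real N + real N \<le> real p * real N - real N" by (simp add: algebra_simps)
  then have "real N \<le> 0" by linarith
  then have "N = 0" by simp
  then show False using mN Lpos by simp
qed

lemma block_sum:
  fixes F F2 :: "int \<Rightarrow> real" and Mi j :: int and a p Lp :: nat
  assumes Mi: "Mi > 0" and low: "\<forall>y. 0 \<le> y \<and> y < int a * Mi \<longrightarrow> F2 y = F (y mod Mi + j)"
    and Fper: "\<forall>x. F (x + (Mi+1)) = F x" and F0: "F (Mi + j) = 0"
    and F2per: "\<forall>x. F2 (x + int Lp) = F2 x" and Lp: "int Lp = int a * Mi + (int p + 1)"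
  shows "S F2 1 (int Lp) = real a * S F 1 (Mi + 1) + S F2 (int a * Mi) (int p + 1)"
proof -
  have "S F2 1 (int Lp) = S F2 0 (int Lp)" using S_inv[OF F2per] by simp
  also have "\<dots> = S F2 0 (int a * Mi) + S F2 (int a * Mi) (int p + 1)"
    using S_split[of "int a * Mi" "int p + 1" F2 0] Lp Mi by simp
  also have "S F2 0 (int a * Mi) = S (\<lambda>y. F (y mod Mi + j)) 0 (int a * Mi)"
    by (rule S_cong) (use low in auto)
  also have "\<dots> = real a * S (\<lambda>y. F (y mod Mi + j)) 0 Mi"
    by (rule S_mult) (use Mi in auto)
  also have "S (\<lambda>y. F (y mod Mi + j)) 0 Mi = S (\<lambda>y. F (y + j)) 0 Mi"
    by (rule S_cong) simp
  also have "S (\<lambda>y. F (y + j)) 0 Mi = S (\<lambda>y. F (y + j)) 0 (Mi + 1)"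
    using S_split[of Mi 1 "\<lambda>y. F (y + j)" 0] Mi S_one[of "\<lambda>y. F (y + j)"] F0 by simp
  also have "\<dots> = S F j (Mi + 1)" using S_shift[of F j 0 "Mi+1"] by simp
  also have "\<dots> = S F 1 (Mi + 1)" using S_inv[OF Fper] Mi by (metis less_imp_le add_nonneg_nonneg zero_le_one)
  finally show ?thesis .
qed

theorem theorem2:
  fixes U :: "nat \<Rightarrow> real" and p m :: nat and c :: "int \<Rightarrow> bool" and i j :: int
  assumes "p \<ge> 2"
    and "\<forall>k\<in>{1..p}. U k > 0"
    and "1 \<le> m" and "m \<le> p - 1"
    and "ground_state U p m c"
    and "i < j" and "c i" and "c j"
    and "\<forall>l. i < l \<and> l < j \<longrightarrow> \<not> c l"
  shows "j - i - 1 \<le> int p"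
proof (rule ccontr)
  assume gbig: "\<not> j - i - 1 \<le> int p"
  note U = assms(2)
  obtain L where hd: "has_density c L m"
    and mn: "\<forall>c' L'. has_density c' L' m \<longrightarrow> energy_density U p c L \<le> energy_density U p c' L'"
    using assms(5) unfolding ground_state_def by blast
  have Lpos: "L > 0" and cper: "\<forall>x. c (x + int L) = c x"
    using hd unfolding has_density_def periodic_config_def by auto
  have cminus: "c (x - int L) = c x" for x using cper[rule_format, of "x - int L"] by simp
  define N where "N = occ_count c L"
  have mN: "m * N = L" using hd unfolding has_density_def N_def by simp
  have gap: "\<not> c l" if "i < l" "l < j" for l using assms(9) that by blast
  have jL: "j - int L \<le> i"
  proof (rule ccontr)
    assume "\<not> ?thesis"
    then have "\<not> c (j - int L)" using gap Lpos by simp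
    then show False using cminus assms(8) by simp
  qed
  define Mi where "Mi = int L - 1"
  have Mi_ge: "Mi \<ge> int p + 1" using jL gbig unfolding Mi_def by linarith
  have Mipos: "Mi > 0" using Mi_ge by linarith
  define a where "a = p + 1 - m"
  have a2: "a \<ge> 2" using assms(3,4) unfolding a_def by linarith
  define Lp where "Lp = a * L + m"
  have Lp_eq: "int Lp = int a * Mi + (int p + 1)"
  proof -
    have "int a = int p + 1 - int m" unfolding a_def using assms(3,4) by linarith
    then show ?thesis unfolding Lp_def Mi_def by (simp add: algebra_simps)
  qed
  have Lp_pos: "Lp > 0" unfolding Lp_def using assms(3) by simp
  define c2 where "c2 y = (let q = y mod int Lp in if q < int a * Mi then c (q mod Mi + j) else q = int a * Mi)" for y
  have sfalse: "\<not> c (r + j)" if "Mi - int p \<le> r" "r \<le> Mi" for r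
  proof -
    have "\<not> c (r + j - int L)" using gap[of "r + j - int L"] that gbig unfolding Mi_def by linarith
    then show ?thesis using cminus by simp
  qed
  have c2_low: "c2 y = c (y mod Mi + j)" if "0 \<le> y" "y < int a * Mi" for y
  proof -
    have "y mod int Lp = y" using that Lp_eq by (simp add: mod_pos_pos_trivial)
    then show ?thesis unfolding c2_def using that by simp
  qed
  have c2_high: "c2 y = (y = int a * Mi)" if "int a * Mi \<le> y" "y < int Lp" for y
  proof -
    have "0 \<le> int a * Mi" using Mipos by simp
    then have "y mod int Lp = y" using that by (simp add: mod_pos_pos_trivial)
    then show ?thesis unfolding c2_def using that by simp
  qed
  have c2per: "\<forall>y. c2 (y + int Lp) = c2 y" unfolding c2_def by simp
  have loc_low: "loc U p c2 y = loc U p c (y mod Mi + j)" if y: "0 \<le> y" "y < int a * Mi" for y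
    unfolding loc_def
  proof (rule sum.cong[OF refl])
    fix k assume k: "k \<in> {1..p}"
    define r where "r = y mod Mi"
    define q where "q = y div Mi"
    have r: "0 \<le> r" "r < Mi" unfolding r_def using Mipos by auto
    have yq: "y = q * Mi + r" unfolding q_def r_def by simp
    show "U k * of_bool (c2 y) * of_bool (c2 (y + int k)) =
          U k * of_bool (c (y mod Mi + j)) * of_bool (c (y mod Mi + j + int k))"
    proof (cases "c (r + j)")
      case False
      then show ?thesis using c2_low[OF y] unfolding r_def by simp
    next
      case True
      have rs: "r < Mi - int p" using sfalse[of r] True r by force
      have "q * Mi < int a * Mi" using yq r y by linarith
      then have "q < int a" using Mipos by (simp add: mult_less_cancel_right)
      then have "(q + 1) * Mi \<le> int a * Mi" using Mipos by (intro mult_right_mono) auto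
      then have yk: "y + int k < int a * Mi" using yq rs k by (simp add: algebra_simps)
      have "(y + int k) mod Mi = (r + int k) mod Mi" unfolding r_def by (simp add: mod_add_left_eq)
      also have "\<dots> = r + int k" using rs r k by (intro mod_pos_pos_trivial) auto
      finally have "c2 (y + int k) = c (r + int k + j)" using c2_low[of "y + int k"] yk y by simp
      then show ?thesis using c2_low[OF y] unfolding r_def by (simp add: algebra_simps)
    qed
  qed
  have loc_high: "loc U p c2 y = 0" if y: "int a * Mi \<le> y" "y < int Lp" for y
    unfolding loc_def
  proof (rule sum.neutral, rule ballI)
    fix k assume k: "k \<in> {1..p}"
    show "U k * of_bool (c2 y) * of_bool (c2 (y + int k)) = 0"
    proof (cases "y = int a * Mi")
      case True
      then have "\<not> c2 (y + int k)" using c2_high[of "y + int k"] k Lp_eq by auto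
      then show ?thesis by simp
    next
      case False
      then show ?thesis using c2_high[OF y] by simp
    qed
  qed
  define E where "E = S (loc U p c) 1 (int L)"
  have Epos: "E > 0" unfolding E_def using energy_pos[OF assms(1,2,3,4) hd] .
  have LMi: "int L = Mi + 1" unfolding Mi_def by simp
  have E2: "S (loc U p c2) 1 (int Lp) = real a * E"
  proof -
    have "S (loc U p c2) 1 (int Lp) = real a * S (loc U p c) 1 (Mi + 1) + S (loc U p c2) (int a * Mi) (int p + 1)"
    proof (rule block_sum[OF Mipos _ _ _ _ Lp_eq])
      show "\<forall>y. 0 \<le> y \<and> y < int a * Mi \<longrightarrow> loc U p c2 y = loc U p c (y mod Mi + j)" using loc_low by blast
      show "\<forall>x. loc U p c (x + (Mi + 1)) = loc U p c x" using loc_per[OF cper] LMi by simp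
      show "loc U p c (Mi + j) = 0" unfolding loc_def using sfalse[of Mi] by simp
      show "\<forall>x. loc U p c2 (x + int Lp) = loc U p c2 x" by (rule loc_per[OF c2per])
    qed
    moreover have "S (loc U p c2) (int a * Mi) (int p + 1) = S (\<lambda>_. 0) (int a * Mi) (int p + 1)"
      by (rule S_cong) (use loc_high Lp_eq in auto)
    ultimately show ?thesis unfolding E_def LMi by (simp add: S_def)
  qed
  have N2: "real (occ_count c2 Lp) = real a * real N + 1"
  proof -
    have "S (\<lambda>x. of_bool (c2 x)) 1 (int Lp) = real a * S (\<lambda>x. of_bool (c x)) 1 (Mi + 1) + S (\<lambda>x. of_bool (c2 x)) (int a * Mi) (int p + 1)"
    proof (rule block_sum[OF Mipos _ _ _ _ Lp_eq])
      show "\<forall>y. 0 \<le> y \<and> y < int a * Mi \<longrightarrow> (of_bool (c2 y) :: real) = of_bool (c (y mod Mi + j))" using c2_low by simp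
      show "\<forall>x. (of_bool (c (x + (Mi + 1))) :: real) = of_bool (c x)" using cper LMi by simp
      show "(of_bool (c (Mi + j)) :: real) = 0" using sfalse[of Mi] by simp
      show "\<forall>x. (of_bool (c2 (x + int Lp)) :: real) = of_bool (c2 x)" using c2per by simp
    qed
    moreover have "S (\<lambda>x. of_bool (c2 x)) (int a * Mi) (int p + 1) = 1"
    proof -
      have "S (\<lambda>x. of_bool (c2 x)) (int a * Mi) (1 + int p) =
            S (\<lambda>x. of_bool (c2 x)) (int a * Mi) 1 + S (\<lambda>x. of_bool (c2 x)) (int a * Mi + 1) (int p)"
        by (rule S_split) auto
      moreover have "S (\<lambda>x. of_bool (c2 x)) (int a * Mi) 1 = 1"
        using S_one c2_high[of "int a * Mi"] Lp_eq by simp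
      moreover have "S (\<lambda>x. of_bool (c2 x)) (int a * Mi + 1) (int p) = S (\<lambda>_. 0) (int a * Mi + 1) (int p)"
        by (rule S_cong) (use c2_high Lp_eq in auto)
      ultimately show ?thesis by (simp add: S_def add.commute)
    qed
    moreover have "real N = S (\<lambda>x. of_bool (c x)) 1 (int L)" unfolding N_def by (rule occ_eq)
    ultimately show ?thesis using occ_eq[of c2 Lp] LMi by simp
  qed
  then have N2': "occ_count c2 Lp = a * N + 1" by (metis of_nat_1 of_nat_add of_nat_mult of_nat_eq_iff)
  have hd2: "has_density c2 Lp m"
    unfolding has_density_def periodic_config_def
  proof (intro conjI)
    show "0 < Lp" by (rule Lp_pos)
    show "\<forall>i. c2 (i + int Lp) = c2 i" by (rule c2per)
    have "m * (a * N + 1) = Lp" unfolding Lp_def using mN by (simp add: algebra_simps)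
    then show "m * occ_count c2 Lp = Lp" using N2' by simp
  qed
  have "energy_density U p c L \<le> energy_density U p c2 Lp" using mn hd2 by blast
  then have "E / real L \<le> real a * E / real Lp" unfolding ed_eq E_def[symmetric] E2 .
  moreover have "real Lp = real a * real L + real m" unfolding Lp_def by simp
  ultimately have "E / real L \<le> real a * E / (real a * real L + real m)" by simp
  then have "E * (real a * real L + real m) \<le> real a * E * real L"
  proof -
    have D: "0 < real a * real L + real m" using assms(3) by (simp add: add_nonneg_pos)
    show ?thesis using \<open>E / real L \<le> real a * E / (real a * real L + real m)\<close> Lpos D
      by (simp add: divide_simps)
  qed
  then have "E * real m \<le> 0" by (simp add: algebra_simps)
  then show False using Epos assms(3)
    by (simp add: mult_le_0_iff)
qed

end
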